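(* In the session calculus, strong weak fairness of instructions (SWI) coincides with strong fairness of components (SC): a path is SWI-fair iff it is SC-fair.
   Context: Session calculus: threads $P ::= \mathbf{end} \mid \bigoplus_{i\in I} p_i!\lambda_i;P_i \mid \sum_{i\in I} p_i?\lambda_i;P_i \mid X \mid \mu X.P$ (guarded recursion), thread states additionally $\langle q!\lambda\rangle;P$; networks $p[\![P]\!]\mid 0\mid N\parallel N$ with distinct locations and closed threads, modulo associativity/commutativity/unit. Transitions: (choice) $p[\![\bigoplus_{i\in I}p_i!\lambda_i;P_i]\!]\parallel N \xrightarrow{\tau} p[\![\langle p_k!\lambda_k\rangle;P_k]\!]\parallel N$; (unfold) $p[\![\mu X.P]\!]\parallel N\xrightarrow{\tau} p[\![P\{\mu X.P/X\}]\!]\parallel N$; (comm) $p_k[\![\langle q!\lambda_k\rangle;Q]\!]\parallel q[\![\sum_{i\in I}p_i?\lambda_i;P_i]\!]\parallel N \xrightarrow{(p_k,\lambda_k,q)} p_k[\![Q]\!]\parallel q[\![P_k]\!]\parallel N$. $\mathrm{comp}(t)$ is the moving location for a $\tau$-transition and $\{p,q\}$ for label $(p,\lambda,q)$. A path is a network state with a maximal sequence of transitions. Instructions: the occurrences of subexpressions $p_k!\lambda_k$, $p_k?\lambda_k$ or $\mu X$ in the network expression; each $\tau$-transition stems from one instruction and each communication transition from two; $\mathrm{instr}(t)$ is this set. Instruction $I$ is enabled in $N$ if some transition $t$ from $N$ has $I\in\mathrm{instr}(t)$; it is requested in $N$ if it is ready to be executed by its own thread in $N$ (even if not enabled for lack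 of a synchronisation partner); a path engages in $I$ if it contains $t$ with $I\in\mathrm{instr}(t)$. A path $\pi$ is SWI-fair if for every suffix $\pi'$, every instruction that is requested in every state of $\pi'$ and enabled in some state of every suffix of $\pi'$ is engaged in by $\pi'$. A path $\pi$ is SC-fair if for every suffix $\pi'$, every location $p$ such that every suffix of $\pi'$ contains a state with a transition $t$ satisfying $p\in\mathrm{comp}(t)$ has a transition involving $p$ in $\pi'$. *)

theory Defs
  imports Main "HOL-Library.Extended_Nat"
begin

text \<open>Every instruction occurrence (an output prefix p!l, an input prefix p?l, a
  recursion binder mu X, and also the pending output of a thread state) carries a
  label of type 'lab naming the occurrence. Labels are inherited by copies created
  by unfolding, so an instruction of any later state is identified with the
  occurrence in the initial network expression it stems from. A branch of a choice
  is (label, partner location, message, continuation).\<close>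

datatype ('loc, 'msg, 'lab, 'var) thread =
    End
  | Choice "('lab \<times> 'loc \<times> 'msg \<times> ('loc, 'msg, 'lab, 'var) thread) list"
      \<comment> \<open>internal choice: big-oplus of p_i!l_i;P_i\<close>
  | Branch "('lab \<times> 'loc \<times> 'msg \<times> ('loc, 'msg, 'lab, 'var) thread) list"
      \<comment> \<open>external choice: sum of p_i?l_i;P_i\<close>
  | Var 'var
  | Mu 'lab 'var "('loc, 'msg, 'lab, 'var) thread"
  | Pending 'lab 'loc 'msg "('loc, 'msg, 'lab, 'var) thread"
      \<comment> \<open>thread state: chosen output q!l, awaiting communication\<close>

fun subst :: "'var \<Rightarrow> ('loc, 'msg, 'lab, 'var) thread \<Rightarrow> ('loc, 'msg, 'lab, 'var) thread
                \<Rightarrow> ('loc, 'msg, 'lab, 'var) thread" where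
  "subst X Q End = End"
| "subst X Q (Choice bs) = Choice (map (\<lambda>(l, p, m, P). (l, p, m, subst X Q P)) bs)"
| "subst X Q (Branch bs) = Branch (map (\<lambda>(l, p, m, P). (l, p, m, subst X Q P)) bs)"
| "subst X Q (Var Y) = (if X = Y then Q else Var Y)"
| "subst X Q (Mu l Y P) = (if X = Y then Mu l Y P else Mu l Y (subst X Q P))"
| "subst X Q (Pending l q m P) = Pending l q m (subst X Q P)"

fun fv :: "('loc, 'msg, 'lab, 'var) thread \<Rightarrow> 'var set" where
  "fv End = {}"
| "fv (Choice bs) = (\<Union>(l, p, m, P) \<in> set bs. fv P)"
| "fv (Branch bs) = (\<Union>(l, p, m, P) \<in> set bs. fv P)"
| "fv (Var X) = {X}"
| "fv (Mu l X P) = fv P - {X}"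
| "fv (Pending l q m P) = fv P"

fun unguarded :: "('loc, 'msg, 'lab, 'var) thread \<Rightarrow> 'var set" where
  "unguarded End = {}"
| "unguarded (Choice bs) = {}"
| "unguarded (Branch bs) = {}"
| "unguarded (Var X) = {X}"
| "unguarded (Mu l X P) = unguarded P - {X}"
| "unguarded (Pending l q m P) = {}"

fun guarded :: "('loc, 'msg, 'lab, 'var) thread \<Rightarrow> bool" where
  "guarded End = True"
| "guarded (Choice bs) = (\<forall>(l, p, m, P) \<in> set bs. guarded P)"
| "guarded (Branch bs) = (\<forall>(l, p, m, P) \<in> set bs. guarded P)"
| "guarded (Var X) = True"
| "guarded (Mu l X P) = (X \<notin> unguarded P \<and> guarded P)"
| "guarded (Pending l q m P) = guarded P"

fun labels :: "('loc, 'msg, 'lab, 'var) thread \<Rightarrow> 'lab list" where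
  "labels End = []"
| "labels (Choice bs) = concat (map (\<lambda>(l, p, m, P). l # labels P) bs)"
| "labels (Branch bs) = concat (map (\<lambda>(l, p, m, P). l # labels P) bs)"
| "labels (Var X) = []"
| "labels (Mu l X P) = l # labels P"
| "labels (Pending l q m P) = l # labels P"

text \<open>A network assigns threads to finitely many distinct locations; this
  representation is modulo associativity, commutativity and unit 0.\<close>
type_synonym ('loc, 'msg, 'lab, 'var) network = "'loc \<rightharpoonup> ('loc, 'msg, 'lab, 'var) thread"

text \<open>An instruction is an occurrence, identified by its location and label.\<close>
type_synonym ('loc, 'lab) instr = "'loc \<times> 'lab"

text \<open>Transition labels; the tau label is annotated with the moving location
  (needed to define comp).\<close>
datatype ('loc, 'msg) act = Tau 'loc | Com 'loc 'msg 'loc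

fun comp :: "('loc, 'msg) act \<Rightarrow> 'loc set" where
  "comp (Tau p) = {p}"
| "comp (Com p m q) = {p, q}"

text \<open>step N a I N': a transition from N to N' with label a stemming from the set
  of instructions I.\<close>
inductive step :: "('loc, 'msg, 'lab, 'var) network \<Rightarrow> ('loc, 'msg) act
                   \<Rightarrow> ('loc, 'lab) instr set \<Rightarrow> ('loc, 'msg, 'lab, 'var) network \<Rightarrow> bool" where
  choice: "\<lbrakk> N p = Some (Choice bs); k < length bs; bs ! k = (l, q, m, P) \<rbrakk>
           \<Longrightarrow> step N (Tau p) {(p, l)} (N(p \<mapsto> Pending l q m P))"
| unfold: "N p = Some (Mu l X P)
           \<Longrightarrow> step N (Tau p) {(p, l)} (N(p \<mapsto> subst X (Mu l X P) P))"
| comm: "\<lbrakk> N p = Some (Pending l q m Q); N q = Some (Branch bs); k < length bs;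
           bs ! k = (l', p, m, P); p \<noteq> q \<rbrakk>
           \<Longrightarrow> step N (Com p m q) {(p, l), (q, l')} (N(p \<mapsto> Q, q \<mapsto> P))"

definition enabled :: "('loc, 'lab) instr \<Rightarrow> ('loc, 'msg, 'lab, 'var) network \<Rightarrow> bool" where
  "enabled I N \<longleftrightarrow> (\<exists>a Is N'. step N a Is N' \<and> I \<in> Is)"

fun ready :: "('loc, 'msg, 'lab, 'var) thread \<Rightarrow> 'lab set" where
  "ready End = {}"
| "ready (Choice bs) = (\<lambda>(l, p, m, P). l) ` set bs"
| "ready (Branch bs) = (\<lambda>(l, p, m, P). l) ` set bs"
| "ready (Var X) = {}"
| "ready (Mu l X P) = {l}"
| "ready (Pending l q m P) = {l}"

definition requested :: "('loc, 'lab) instr \<Rightarrow> ('loc, 'msg, 'lab, 'var) network \<Rightarrow> bool" where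
  "requested I N \<longleftrightarrow> (\<exists>P. N (fst I) = Some P \<and> snd I \<in> ready P)"

text \<open>Well-formed initial network: finitely many locations, closed and guarded
  threads, and every occurrence carries its own label (so labels name exactly the
  occurrences of the network expression).\<close>
definition wf_network :: "('loc, 'msg, 'lab, 'var) network \<Rightarrow> bool" where
  "wf_network N \<longleftrightarrow> finite (dom N) \<and>
     (\<forall>p P. N p = Some P \<longrightarrow> fv P = {} \<and> guarded P \<and> distinct (labels P))"

definition is_path :: "(nat \<Rightarrow> ('loc, 'msg, 'lab, 'var) network)
     \<Rightarrow> (nat \<Rightarrow> ('loc, 'msg) act \<times> ('loc, 'lab) instr set) \<Rightarrow> enat \<Rightarrow> bool" where
  "is_path s tr n \<longleftrightarrow>
     (\<forall>i. enat i < n \<longrightarrow> step (s i) (fst (tr i)) (snd (tr i)) (s (Suc i))) \<and>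
     (\<forall>k. n = enat k \<longrightarrow> \<not> (\<exists>a Is N'. step (s k) a Is N'))"

text \<open>Suffixes are indexed by their starting position j (with j \<le> n).\<close>
definition SWI_fair :: "(nat \<Rightarrow> ('loc, 'msg, 'lab, 'var) network)
     \<Rightarrow> (nat \<Rightarrow> ('loc, 'msg) act \<times> ('loc, 'lab) instr set) \<Rightarrow> enat \<Rightarrow> bool" where
  "SWI_fair s tr n \<longleftrightarrow>
     (\<forall>j. enat j \<le> n \<longrightarrow> (\<forall>I.
        (\<forall>i. j \<le> i \<and> enat i \<le> n \<longrightarrow> requested I (s i)) \<and>
        (\<forall>k. j \<le> k \<and> enat k \<le> n \<longrightarrow> (\<exists>i. k \<le> i \<and> enat i \<le> n \<and> enabled I (s i)))
        \<longrightarrow> (\<exists>i. j \<le> i \<and> enat i < n \<and> I \<in> snd (tr i))))"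

definition SC_fair :: "(nat \<Rightarrow> ('loc, 'msg, 'lab, 'var) network)
     \<Rightarrow> (nat \<Rightarrow> ('loc, 'msg) act \<times> ('loc, 'lab) instr set) \<Rightarrow> enat \<Rightarrow> bool" where
  "SC_fair s tr n \<longleftrightarrow>
     (\<forall>j. enat j \<le> n \<longrightarrow> (\<forall>p.
        (\<forall>k. j \<le> k \<and> enat k \<le> n \<longrightarrow>
            (\<exists>i a Is N'. k \<le> i \<and> enat i \<le> n \<and> step (s i) a Is N' \<and> p \<in> comp a))
        \<longrightarrow> (\<exists>i. j \<le> i \<and> enat i < n \<and> p \<in> comp (fst (tr i)))))"

end

theory Submission
  imports Defs
begin

lemma step_instr_comp:
  assumes "step N a Is N'" "I \<in> Is" shows "fst I \<in> comp a"
  using assms by (induction rule: step.induct) auto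

lemma step_other:
  assumes "step N a Is N'" "p \<notin> comp a" shows "N' p = N p"
  using assms by (induction rule: step.induct) auto

lemma step_comp_ready:
  assumes "step N a Is N'" "p \<in> comp a" "N p = Some T"
  shows "\<exists>l\<in>ready T. (p, l) \<in> Is"
  using assms
proof (induction rule: step.induct)
  case (choice N p' bs k l q m P)
  then show ?case using nth_mem[OF choice.hyps(2)] by (force simp: image_iff)
next
  case (unfold N p' l X P) then show ?case by auto
next
  case (comm N p' l q m Q bs k l' P)
  then show ?case using nth_mem[OF comm.hyps(3)] by (force simp: image_iff)
qed

lemma size_branch_lt:
  assumes "(l, q, m, P) \<in> set bs" shows "size P < size (Branch bs)"
proof -
  have "size_prod (\<lambda>_. 0) (size_prod (\<lambda>_. 0) (size_prod (\<lambda>_. 0) size)) (l, q, m, P)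
     \<le> size_list (size_prod (\<lambda>_. 0) (size_prod (\<lambda>_. 0) (size_prod (\<lambda>_. 0) size))) bs"
    using assms by (rule size_list_estimation') simp
  then show ?thesis by simp
qed

lemma step_shrink:
  assumes "step N a Is N'" "p \<in> comp a" "(p, l) \<notin> Is"
    "N p = Some T" "l \<in> ready T" "N' p = Some T'" "l \<in> ready T'"
  shows "size T' < size T"
  using assms
proof (induction rule: step.induct)
  case (choice N p' bs k l0 q m P)
  then show ?case by auto
next
  case (unfold N p' l0 X P) then show ?case by auto
next
  case (comm N p' l0 q m Q bs k l' P)
  show ?case
  proof (cases "p = p'")
    case True then show ?thesis using comm by auto
  next
    case False
    then have "p = q" using comm by auto
    then have "T = Branch bs" "T' = P" using comm False by auto
    then show ?thesis using size_branch_lt nth_mem[OF comm.hyps(3)] comm.hyps(4) by metis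
  qed
qed

lemma const_between:
  assumes path: "is_path s tr n"
    and none: "\<And>i. j \<le> i \<Longrightarrow> i < i0 \<Longrightarrow> p \<notin> comp (fst (tr i))"
    and lt: "enat i0 \<le> n"
  shows "j \<le> i \<Longrightarrow> i \<le> i0 \<Longrightarrow> s i p = s j p"
proof (induction i)
  case 0 then show ?case by simp
next
  case (Suc i)
  show ?case
  proof (cases "j = Suc i")
    case True then show ?thesis by simp
  next
    case False
    then have ji: "j \<le> i" "i < i0" using Suc.prems by auto
    then have "enat i < n" using lt by (metis enat_ord_simps(2) order_less_le_trans)
    then have "step (s i) (fst (tr i)) (snd (tr i)) (s (Suc i))" using path unfolding is_path_def by blast
    then have "s (Suc i) p = s i p" using step_other none[OF ji] by metis
    then show ?thesis using Suc ji by simp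
  qed
qed

lemma sc_to_swi_aux:
  assumes path: "is_path s tr n" and SC: "SC_fair s tr n"
  shows "enat j \<le> n \<Longrightarrow> s j p = Some T \<Longrightarrow>
    (\<forall>i. j \<le> i \<and> enat i \<le> n \<longrightarrow> requested (p, l) (s i)) \<Longrightarrow>
    (\<forall>k. j \<le> k \<and> enat k \<le> n \<longrightarrow> (\<exists>i. k \<le> i \<and> enat i \<le> n \<and> enabled (p, l) (s i))) \<Longrightarrow>
    \<exists>i. j \<le> i \<and> enat i < n \<and> (p, l) \<in> snd (tr i)"
proof (induction T arbitrary: j rule: measure_induct_rule[of size])
  case (less T j)
  have prem: "\<forall>k. j \<le> k \<and> enat k \<le> n \<longrightarrow>
            (\<exists>i a Is N'. k \<le> i \<and> enat i \<le> n \<and> step (s i) a Is N' \<and> p \<in> comp a)"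
  proof (intro allI impI)
    fix k assume "j \<le> k \<and> enat k \<le> n"
    then obtain i where i: "k \<le> i" "enat i \<le> n" "enabled (p, l) (s i)" using less.prems(4) by blast
    then obtain a Is N' where "step (s i) a Is N'" "(p, l) \<in> Is" unfolding enabled_def by blast
    then show "\<exists>i a Is N'. k \<le> i \<and> enat i \<le> n \<and> step (s i) a Is N' \<and> p \<in> comp a"
      using i step_instr_comp by fastforce
  qed
  then have ex: "\<exists>i. j \<le> i \<and> enat i < n \<and> p \<in> comp (fst (tr i))"
  proof -
    have "\<forall>j. enat j \<le> n \<longrightarrow> (\<forall>p.
        (\<forall>k. j \<le> k \<and> enat k \<le> n \<longrightarrow>
            (\<exists>i a Is N'. k \<le> i \<and> enat i \<le> n \<and> step (s i) a Is N' \<and> p \<in> comp a))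
        \<longrightarrow> (\<exists>i. j \<le> i \<and> enat i < n \<and> p \<in> comp (fst (tr i))))"
      using SC unfolding SC_fair_def .
    then show ?thesis using less.prems(1) prem by simp
  qed
  define i0 where "i0 = (LEAST i. j \<le> i \<and> enat i < n \<and> p \<in> comp (fst (tr i)))"
  have i0: "j \<le> i0" "enat i0 < n" "p \<in> comp (fst (tr i0))"
    using LeastI_ex[OF ex] unfolding i0_def by auto
  have none: "\<And>i. j \<le> i \<Longrightarrow> i < i0 \<Longrightarrow> p \<notin> comp (fst (tr i))"
  proof -
    fix i assume a: "j \<le> i" "i < i0"
    then have "enat i < n" using i0(2) by (metis enat_ord_simps(2) order.strict_trans)
    show "p \<notin> comp (fst (tr i))"
    proof
      assume "p \<in> comp (fst (tr i))"
      then have "i0 \<le> i" unfolding i0_def using a(1) \<open>enat i < n\<close> by (intro Least_le) simp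
      then show False using a(2) by simp
    qed
  qed
  have si0: "s i0 p = Some T"
  proof -
    have "enat i0 \<le> n" using i0(2) by (simp add: order_less_imp_le)
    note lt0 = this
    have "s i0 p = s j p" by (rule const_between[OF path none lt0 i0(1) order_refl])
    then show ?thesis using less.prems(2) by simp
  qed
  show ?case
  proof (cases "(p, l) \<in> snd (tr i0)")
    case True then show ?thesis using i0 by blast
  next
    case False
    have stp: "step (s i0) (fst (tr i0)) (snd (tr i0)) (s (Suc i0))"
      using path i0(2) unfolding is_path_def by blast
    have le1: "enat (Suc i0) \<le> n" using i0(2) by (simp add: Suc_ile_eq)
    have "enat i0 \<le> n" using i0(2) by (simp add: order_less_imp_le)
    then have "requested (p, l) (s i0)" using less.prems(3) i0(1) by blast
    then have r0: "l \<in> ready T" using si0 unfolding requested_def by simp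
    have "requested (p, l) (s (Suc i0))" using less.prems(3) i0(1) le1 by simp
    then obtain T' where T': "s (Suc i0) p = Some T'" "l \<in> ready T'"
      unfolding requested_def by auto
    have "size T' < size T" using step_shrink[OF stp i0(3) False si0 r0 T'] .
    moreover have "\<forall>i. Suc i0 \<le> i \<and> enat i \<le> n \<longrightarrow> requested (p, l) (s i)"
      using less.prems(3) i0(1) by auto
    moreover have "\<forall>k. Suc i0 \<le> k \<and> enat k \<le> n \<longrightarrow> (\<exists>i. k \<le> i \<and> enat i \<le> n \<and> enabled (p, l) (s i))"
      using less.prems(4) i0(1) by auto
    ultimately obtain i where "Suc i0 \<le> i" "enat i < n" "(p, l) \<in> snd (tr i)"
      using less.IH[OF _ le1 T'(1)] by blast
    then show ?thesis using i0(1) by (intro exI[of _ i]) auto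
  qed
qed

lemma finite_ready: "finite (ready T)"
  by (cases T) auto

lemma step_comp_some:
  assumes "step N a Is N'" "p \<in> comp a" shows "N p \<noteq> None"
  using assms by (induction rule: step.induct) auto

lemma swi_to_sc:
  assumes path: "is_path s tr n" and SWI: "SWI_fair s tr n"
  shows "SC_fair s tr n"
  unfolding SC_fair_def
proof (intro allI impI)
  fix j p
  assume jn: "enat j \<le> n"
    and prem: "\<forall>k. j \<le> k \<and> enat k \<le> n \<longrightarrow>
            (\<exists>i a Is N'. k \<le> i \<and> enat i \<le> n \<and> step (s i) a Is N' \<and> p \<in> comp a)"
  show "\<exists>i. j \<le> i \<and> enat i < n \<and> p \<in> comp (fst (tr i))"
  proof (rule ccontr)
    assume nex: "\<not> (\<exists>i. j \<le> i \<and> enat i < n \<and> p \<in> comp (fst (tr i)))"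
    have const: "s i p = s j p" if "j \<le> i" "enat i \<le> n" for i
    proof -
      have none: "\<And>i'. j \<le> i' \<Longrightarrow> i' < i \<Longrightarrow> p \<notin> comp (fst (tr i'))"
      proof -
        fix i' assume a: "j \<le> i'" "i' < i"
        then have "enat i' < n" using that(2) by (metis enat_ord_simps(2) order_less_le_trans)
        then show "p \<notin> comp (fst (tr i'))" using nex a(1) by blast
      qed
      show ?thesis by (rule const_between[OF path none that(2) that(1) order_refl])
    qed
    obtain i1 a1 Is1 N1 where i1: "j \<le> i1" "enat i1 \<le> n" "step (s i1) a1 Is1 N1" "p \<in> comp a1"
      using prem jn by blast
    have "s i1 p \<noteq> None" using step_comp_some[OF i1(3,4)] .
    then obtain T where Tj: "s j p = Some T" using const[OF i1(1,2)] by auto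
    have constT: "s i p = Some T" if "j \<le> i" "enat i \<le> n" for i using const[OF that] Tj by simp
    have "\<exists>l\<in>ready T. \<forall>k. j \<le> k \<and> enat k \<le> n \<longrightarrow> (\<exists>i. k \<le> i \<and> enat i \<le> n \<and> enabled (p, l) (s i))"
    proof (rule ccontr)
      assume "\<not> ?thesis"
      then have "\<forall>l\<in>ready T. \<exists>k. j \<le> k \<and> enat k \<le> n \<and> \<not> (\<exists>i. k \<le> i \<and> enat i \<le> n \<and> enabled (p, l) (s i))"
        by blast
      then obtain f where f: "\<And>l. l \<in> ready T \<Longrightarrow> j \<le> f l \<and> enat (f l) \<le> n \<and> \<not> (\<exists>i. f l \<le> i \<and> enat i \<le> n \<and> enabled (p, l) (s i))"
        by metis
      define K where "K = Max (insert j (f ` ready T))"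
      have fin: "finite (insert j (f ` ready T))" using finite_ready[of T] by simp
      have "K \<in> insert j (f ` ready T)" unfolding K_def using fin Max_in by blast
      then have Kn: "enat K \<le> n" using jn f by auto
      have jK: "j \<le> K" unfolding K_def using fin by simp
      have fK: "f l \<le> K" if "l \<in> ready T" for l unfolding K_def using fin that by simp
      obtain i a Is N' where i: "K \<le> i" "enat i \<le> n" "step (s i) a Is N'" "p \<in> comp a"
        using prem jK Kn by blast
      have "s i p = Some T" using constT jK i(1,2) by simp
      then obtain l where l: "l \<in> ready T" "(p, l) \<in> Is" using step_comp_ready[OF i(3,4)] by blast
      have "enabled (p, l) (s i)" unfolding enabled_def using i(3) l(2) by blast
      then show False using f[OF l(1)] fK[OF l(1)] i(1,2) by auto
    qed
    then obtain l where l: "l \<in> ready T"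
      and en: "\<forall>k. j \<le> k \<and> enat k \<le> n \<longrightarrow> (\<exists>i. k \<le> i \<and> enat i \<le> n \<and> enabled (p, l) (s i))"
      by blast
    have req: "\<forall>i. j \<le> i \<and> enat i \<le> n \<longrightarrow> requested (p, l) (s i)"
      using constT l unfolding requested_def by simp
    have "\<forall>j. enat j \<le> n \<longrightarrow> (\<forall>I.
        (\<forall>i. j \<le> i \<and> enat i \<le> n \<longrightarrow> requested I (s i)) \<and>
        (\<forall>k. j \<le> k \<and> enat k \<le> n \<longrightarrow> (\<exists>i. k \<le> i \<and> enat i \<le> n \<and> enabled I (s i)))
        \<longrightarrow> (\<exists>i. j \<le> i \<and> enat i < n \<and> I \<in> snd (tr i)))"
      using SWI unfolding SWI_fair_def .
    then obtain i where i: "j \<le> i" "enat i < n" "(p, l) \<in> snd (tr i)"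
      using jn req en by blast
    have "step (s i) (fst (tr i)) (snd (tr i)) (s (Suc i))" using path i(2) unfolding is_path_def by blast
    then have "p \<in> comp (fst (tr i))" using step_instr_comp i(3) by fastforce
    then show False using nex i by blast
  qed
qed

theorem mainTheorem18:
  fixes s :: "nat \<Rightarrow> ('loc, 'msg, 'lab, 'var) network"
    and tr :: "nat \<Rightarrow> ('loc, 'msg) act \<times> ('loc, 'lab) instr set"
    and n :: enat
  assumes "wf_network (s 0)"
    and "is_path s tr n"
  shows "SWI_fair s tr n \<longleftrightarrow> SC_fair s tr n"
proof
  assume "SWI_fair s tr n" then show "SC_fair s tr n" using swi_to_sc assms(2) by blast
next
  assume SC: "SC_fair s tr n"
  show "SWI_fair s tr n"
    unfolding SWI_fair_def
  proof (intro allI impI)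
    fix j I
    assume jn: "enat j \<le> n"
      and h: "(\<forall>i. j \<le> i \<and> enat i \<le> n \<longrightarrow> requested I (s i)) \<and>
        (\<forall>k. j \<le> k \<and> enat k \<le> n \<longrightarrow> (\<exists>i. k \<le> i \<and> enat i \<le> n \<and> enabled I (s i)))"
    obtain p l where I: "I = (p, l)" by (cases I)
    have "requested I (s j)" using h jn by simp
    then obtain T where "s j p = Some T" unfolding requested_def I by auto
    then show "\<exists>i. j \<le> i \<and> enat i < n \<and> I \<in> snd (tr i)"
      using sc_to_swi_aux[OF assms(2) SC jn] h unfolding I by blast
  qed
qed

end
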